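(* Let $L\in\mathbb{R}^{n\times n}$ be a real symmetric positive semidefinite matrix, let $U_k\in\mathbb{R}^{n\times k}$ have orthonormal columns that are eigenvectors of $L$, and let $\mathrm{span}(U_k)$ denote its column space. Let $\beta>0$, let $\mathrm{E},\mathrm{E}_{\text{model}}\in\mathbb{R}$, and set $a=\mathrm{E}-\mathrm{E}_{\text{model}}$. For $\phi,\rho\in\mathbb{R}^n$ define \[ \mathcal{L}(\phi,\rho)=\beta\,\|L\phi-\rho\|_2^2+\Big(a+\tfrac12\,\phi^\top\rho\Big)^2 . \] For $\phi\in\mathrm{span}(U_k)$ let $\rho^\star(\phi)=L\phi-t^\star(\phi)\phi$ with $t^\star(\phi)=\dfrac{a+\frac12\phi^\top L\phi}{2\beta+\frac12\|\phi\|_2^2}$ (the unique minimizer of $\rho\mapsto\mathcal{L}(\phi,\rho)$ over $\mathrm{span}(U_k)$), and define $A(\phi)=a+\tfrac12\,\phi^\top L\phi$. Then \[ \widetilde{\mathcal{L}}(\phi):=\mathcal{L}\big(\phi,\rho^\star(\phi)\big)=A(\phi)^2\,\frac{4\beta}{4\beta+\|\phi\|_2^2}\;\le\;A(\phi)^2, \] with equality if and only if $A(\phi)=0$ or $\phi=0$.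
   Context: $\mathcal{L}$ is the (squared, $L^2$) surrogate training objective combining a Poisson-equation residual $\|L\phi-\rho\|^2$ weighted by $\beta$ with a squared energy term involving the electrostatic energy $\frac12\phi^\top\rho$; $\phi$ plays the role of a potential and $\rho$ of charges on the nodes of a graph with Laplacian $L$. *)

theory Defs
  imports "HOL-Analysis.Analysis"
begin

definition surrogate_loss ::
  "real \<Rightarrow> real \<Rightarrow> real^'n^'n \<Rightarrow> real^'n \<Rightarrow> real^'n \<Rightarrow> real" where
  "surrogate_loss \<beta> a L \<phi> \<rho> =
     \<beta> * (norm (L *v \<phi> - \<rho>))\<^sup>2 + (a + 1/2 * (\<phi> \<bullet> \<rho>))\<^sup>2"

definition t_star :: "real \<Rightarrow> real \<Rightarrow> real^'n^'n \<Rightarrow> real^'n \<Rightarrow> real" where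
  "t_star \<beta> a L \<phi> = (a + 1/2 * (\<phi> \<bullet> (L *v \<phi>))) / (2 * \<beta> + 1/2 * (norm \<phi>)\<^sup>2)"

definition rho_star :: "real \<Rightarrow> real \<Rightarrow> real^'n^'n \<Rightarrow> real^'n \<Rightarrow> real^'n" where
  "rho_star \<beta> a L \<phi> = L *v \<phi> - t_star \<beta> a L \<phi> *\<^sub>R \<phi>"

definition A_fun :: "real \<Rightarrow> real^'n^'n \<Rightarrow> real^'n \<Rightarrow> real" where
  "A_fun a L \<phi> = a + 1/2 * (\<phi> \<bullet> (L *v \<phi>))"

end

theory Submission
  imports Defs
begin

lemma key_alg:
  fixes \<phi> w :: "'a::real_inner" and A \<beta> t :: real
  assumes b: "\<beta> > 0" and t: "t = A / (2*\<beta> + 1/2 * (\<phi> \<bullet> \<phi>))"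
  shows "\<beta> * ((t *\<^sub>R \<phi> + w) \<bullet> (t *\<^sub>R \<phi> + w)) + (A - 1/2 * (\<phi> \<bullet> (t *\<^sub>R \<phi> + w)))\<^sup>2
       = \<beta> * (t\<^sup>2 * (\<phi> \<bullet> \<phi>)) + (A - 1/2 * t * (\<phi> \<bullet> \<phi>))\<^sup>2 + \<beta> * (w \<bullet> w) + 1/4 * (\<phi> \<bullet> w)\<^sup>2"
proof -
  have D: "2*\<beta> + 1/2 * (\<phi> \<bullet> \<phi>) > 0" using b by (simp add: add_pos_nonneg)
  have tD: "t * (2*\<beta> + 1/2 * (\<phi> \<bullet> \<phi>)) = A" using D t by simp
  have e: "(t *\<^sub>R \<phi> + w) \<bullet> (t *\<^sub>R \<phi> + w) = t\<^sup>2 * (\<phi> \<bullet> \<phi>) + 2*t*(\<phi> \<bullet> w) + w \<bullet> w"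
    by (simp add: inner_add_left inner_add_right inner_commute power2_eq_square algebra_simps)
  have f: "\<phi> \<bullet> (t *\<^sub>R \<phi> + w) = t * (\<phi> \<bullet> \<phi>) + \<phi> \<bullet> w" by (simp add: inner_add_right)
  show ?thesis unfolding e f tD[symmetric]
    by (simp add: power2_eq_square algebra_simps)
qed

theorem theorem2:
  fixes L :: "real^'n^'n" and U :: "real^'k^'n"
    and \<beta> E E_model :: real and \<phi> :: "real^'n"
  assumes symm: "transpose L = L"
    and psd: "\<forall>x. 0 \<le> x \<bullet> (L *v x)"
    and orth: "transpose U ** U = mat 1"
    and eig: "\<forall>j. \<exists>c. L *v column j U = c *\<^sub>R column j U"
    and beta_pos: "\<beta> > 0"
    and phi_span: "\<phi> \<in> span (columns U)"
  shows "rho_star \<beta> (E - E_model) L \<phi> \<in> span (columns U)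
    \<and> (\<forall>\<rho> \<in> span (columns U). \<rho> \<noteq> rho_star \<beta> (E - E_model) L \<phi> \<longrightarrow>
          surrogate_loss \<beta> (E - E_model) L \<phi> (rho_star \<beta> (E - E_model) L \<phi>)
            < surrogate_loss \<beta> (E - E_model) L \<phi> \<rho>)
    \<and> surrogate_loss \<beta> (E - E_model) L \<phi> (rho_star \<beta> (E - E_model) L \<phi>)
        = (A_fun (E - E_model) L \<phi>)\<^sup>2 * (4 * \<beta> / (4 * \<beta> + (norm \<phi>)\<^sup>2))
    \<and> surrogate_loss \<beta> (E - E_model) L \<phi> (rho_star \<beta> (E - E_model) L \<phi>)
        \<le> (A_fun (E - E_model) L \<phi>)\<^sup>2
    \<and> (surrogate_loss \<beta> (E - E_model) L \<phi> (rho_star \<beta> (E - E_model) L \<phi>)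
          = (A_fun (E - E_model) L \<phi>)\<^sup>2
        \<longleftrightarrow> A_fun (E - E_model) L \<phi> = 0 \<or> \<phi> = 0)"
proof -
  define a where "a = E - E_model"
  define A where "A = A_fun a L \<phi>"
  define t where "t = t_star \<beta> a L \<phi>"
  define s where "s = \<phi> \<bullet> \<phi>"
  have s0: "s \<ge> 0" unfolding s_def by simp
  have nrm: "(norm \<phi>)\<^sup>2 = s" unfolding s_def by (simp add: power2_norm_eq_inner)
  have tdef: "t = A / (2*\<beta> + 1/2 * (\<phi> \<bullet> \<phi>))"
    unfolding t_def A_def t_star_def A_fun_def nrm s_def ..
  have rs: "rho_star \<beta> a L \<phi> = L *v \<phi> - t *\<^sub>R \<phi>" unfolding rho_star_def t_def ..
  have loss: "surrogate_loss \<beta> a L \<phi> \<rho> =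
     \<beta> * ((t *\<^sub>R \<phi> + (rho_star \<beta> a L \<phi> - \<rho>)) \<bullet> (t *\<^sub>R \<phi> + (rho_star \<beta> a L \<phi> - \<rho>)))
     + (A - 1/2 * (\<phi> \<bullet> (t *\<^sub>R \<phi> + (rho_star \<beta> a L \<phi> - \<rho>))))\<^sup>2" for \<rho>
  proof -
    have v: "t *\<^sub>R \<phi> + (rho_star \<beta> a L \<phi> - \<rho>) = L *v \<phi> - \<rho>" unfolding rs by simp
    show ?thesis unfolding v surrogate_loss_def A_def A_fun_def
      by (simp add: power2_norm_eq_inner inner_diff_right algebra_simps)
  qed
  define base where "base = \<beta> * (t\<^sup>2 * s) + (A - 1/2 * t * s)\<^sup>2"
  have loss2: "surrogate_loss \<beta> a L \<phi> \<rho> = base + \<beta> * (w \<bullet> w) + 1/4 * (\<phi> \<bullet> w)\<^sup>2"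
    if "w = rho_star \<beta> a L \<phi> - \<rho>" for \<rho> w
    unfolding loss that base_def s_def using key_alg[OF beta_pos tdef] by simp
  have lstar: "surrogate_loss \<beta> a L \<phi> (rho_star \<beta> a L \<phi>) = base"
    using loss2[of 0] by simp
  have D: "4*\<beta> + s > 0" using beta_pos s0 by simp
  have t2: "t = 2*A / (4*\<beta> + s)" unfolding tdef s_def[symmetric] by (simp add: field_simps)
  have bval: "base = A\<^sup>2 * (4 * \<beta> / (4 * \<beta> + s))"
  proof -
    have Dn: "4*\<beta> + s \<noteq> 0" using D by simp
    have e1: "A - 1/2 * t * s = A * (4*\<beta>) / (4*\<beta> + s)" unfolding t2 using Dn
      by (simp add: field_simps)
    have e2: "t\<^sup>2 = 4*A\<^sup>2 / (4*\<beta> + s)\<^sup>2" unfolding t2 by (simp add: power_divide power_mult_distrib)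
    have "base = (\<beta> * (4*A\<^sup>2 * s) + (A * (4*\<beta>))\<^sup>2) / (4*\<beta> + s)\<^sup>2"
      unfolding base_def e1 e2 by (simp add: power_divide add_divide_distrib)
    also have "\<beta> * (4*A\<^sup>2 * s) + (A * (4*\<beta>))\<^sup>2 = (A\<^sup>2 * (4 * \<beta>)) * (4*\<beta> + s)"
      by (simp add: power2_eq_square algebra_simps)
    also have "(A\<^sup>2 * (4 * \<beta>)) * (4*\<beta> + s) / (4*\<beta> + s)\<^sup>2 = A\<^sup>2 * (4 * \<beta> / (4 * \<beta> + s))"
      using Dn by (simp add: power2_eq_square)
    finally show ?thesis .
  qed
  have lin: "linear ((*v) L)" by simp
  have Lspan: "L *v \<phi> \<in> span (columns U)"
  proof -
    have "(*v) L ` columns U \<subseteq> span (columns U)"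
    proof
      fix y assume "y \<in> (*v) L ` columns U"
      then obtain j where y: "y = L *v column j U" unfolding columns_def by auto
      obtain c where "L *v column j U = c *\<^sub>R column j U" using eig by blast
      moreover have "column j U \<in> span (columns U)"
        by (rule span_base) (auto simp: columns_def)
      ultimately show "y \<in> span (columns U)" using y by (simp add: span_mul)
    qed
    hence "span ((*v) L ` columns U) \<subseteq> span (columns U)" by (simp add: span_minimal)
    moreover have "L *v \<phi> \<in> span ((*v) L ` columns U)"
      using span_linear_image[OF lin, of "columns U"] phi_span by auto
    ultimately show ?thesis by blast
  qed
  have P1: "rho_star \<beta> a L \<phi> \<in> span (columns U)"
    unfolding rs by (intro span_diff Lspan span_mul phi_span)
  have P2: "\<forall>\<rho> \<in> span (columns U). \<rho> \<noteq> rho_star \<beta> a L \<phi> \<longrightarrow>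
          surrogate_loss \<beta> a L \<phi> (rho_star \<beta> a L \<phi>) < surrogate_loss \<beta> a L \<phi> \<rho>"
  proof (intro ballI impI)
    fix \<rho> assume "\<rho> \<noteq> rho_star \<beta> a L \<phi>"
    hence "rho_star \<beta> a L \<phi> - \<rho> \<noteq> 0" by simp
    hence "(rho_star \<beta> a L \<phi> - \<rho>) \<bullet> (rho_star \<beta> a L \<phi> - \<rho>) > 0" by simp
    hence "\<beta> * ((rho_star \<beta> a L \<phi> - \<rho>) \<bullet> (rho_star \<beta> a L \<phi> - \<rho>)) > 0" using beta_pos by simp
    thus "surrogate_loss \<beta> a L \<phi> (rho_star \<beta> a L \<phi>) < surrogate_loss \<beta> a L \<phi> \<rho>"
      unfolding lstar loss2[OF refl, of \<rho>]
      using zero_le_power2[of "\<phi> \<bullet> (rho_star \<beta> a L \<phi> - \<rho>)"] by linarith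
  qed
  have frac: "4 * \<beta> / (4 * \<beta> + s) \<le> 1" using D s0 by simp
  have P4: "base \<le> A\<^sup>2" unfolding bval
    using mult_left_mono[OF frac, of "A\<^sup>2"] by simp
  have P5: "base = A\<^sup>2 \<longleftrightarrow> A = 0 \<or> \<phi> = 0"
  proof
    assume h: "base = A\<^sup>2"
    show "A = 0 \<or> \<phi> = 0"
    proof (rule ccontr)
      assume "\<not> (A = 0 \<or> \<phi> = 0)"
      hence "A\<^sup>2 > 0" "s > 0" unfolding s_def by auto
      hence "4 * \<beta> / (4 * \<beta> + s) < 1" using D beta_pos by simp
      hence "A\<^sup>2 * (4 * \<beta> / (4 * \<beta> + s)) < A\<^sup>2"
        using mult_strict_left_mono[OF \<open>4 * \<beta> / (4 * \<beta> + s) < 1\<close> \<open>A\<^sup>2 > 0\<close>] by simp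
      thus False using h bval by simp
    qed
  next
    assume "A = 0 \<or> \<phi> = 0"
    thus "base = A\<^sup>2" unfolding bval s_def using beta_pos by auto
  qed
  show ?thesis
    using P1 P2 P4 P5 lstar bval nrm unfolding a_def[symmetric] A_def[symmetric] by simp
qed

end
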